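(* Let $K=\mathrm{SU}(2)$ and define $\Pi\colon K^2\to[-2,2]^2$ by $\Pi(a,b)=(\mathrm{tr}(a),\mathrm{tr}(aba^{-1}b^{-1}))$. Then $$\Pi(K^2)=D:=\{(x,t)\in[-2,2]^2 : x^2-2\le t\}.$$ Moreover, the pushforward under $\Pi$ of the Haar measure on $K^2$ is equivalent (mutually absolutely continuous) to the Lebesgue measure restricted to $D$.
   Context: Traces of elements of $\mathrm{SU}(2)$ are real and lie in $[-2,2]$. *)

theory Defs
  imports "HOL-Analysis.Analysis"
begin

definition conj_transpose :: "complex^2^2 \<Rightarrow> complex^2^2" where
  "conj_transpose A = (\<chi> i j. cnj (A $ j $ i))"

definition SU2 :: "(complex^2^2) set" where
  "SU2 = {A. A ** conj_transpose A = mat 1 \<and> det A = 1}"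

text \<open>The map Pi(a,b) = (tr a, tr(a b a^-1 b^-1)) (traces are real on SU(2)).\<close>

definition Pi_map :: "(complex^2^2) \<times> (complex^2^2) \<Rightarrow> real \<times> real" where
  "Pi_map p = (case p of (a, b) \<Rightarrow>
     (Re (trace a), Re (trace (a ** b ** matrix_inv a ** matrix_inv b))))"

definition D_set :: "(real \<times> real) set" where
  "D_set = {(x, t). x \<in> {-2..2} \<and> t \<in> {-2..2} \<and> x\<^sup>2 - 2 \<le> t}"

definition haar_SU2_sq :: "((complex^2^2) \<times> (complex^2^2)) measure \<Rightarrow> bool" where
  "haar_SU2_sq \<mu> \<longleftrightarrow>
     space \<mu> = SU2 \<times> SU2 \<and>
     sets \<mu> = sets (restrict_space borel (SU2 \<times> SU2)) \<and>
     finite_measure \<mu> \<and> emeasure \<mu> (space \<mu>) \<noteq> 0 \<and>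
     (\<forall>g \<in> SU2 \<times> SU2. \<forall>A \<in> sets \<mu>.
        emeasure \<mu> ((\<lambda>x. (fst g ** fst x, snd g ** snd x)) -` A \<inter> space \<mu>) = emeasure \<mu> A)"

end

theory Submission
  imports Defs
begin

lemma mult2: "((A::'a::comm_ring_1^2^2) ** B) $ i $ j = A$i$1 * B$1$j + A$i$2 * B$2$j"
  by (simp add: matrix_matrix_mult_def sum_2)
lemma trace2: "trace (A::'a::comm_ring_1^2^2) = A$1$1 + A$2$2"
  by (simp add: trace_def sum_2)
lemma eq2: "(A::'a^2^2) = B \<longleftrightarrow> A$1$1 = B$1$1 \<and> A$1$2 = B$1$2 \<and> A$2$1 = B$2$1 \<and> A$2$2 = B$2$2"
  by (auto simp: vec_eq_iff forall_2)
lemma ct2: "conj_transpose A $ i $ j = cnj (A $ j $ i)"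
  by (simp add: conj_transpose_def)
lemma mat1_2: "(mat 1 :: 'a::zero_neq_one^2^2) $ 1 $ 1 = 1" "(mat 1 :: 'a::zero_neq_one^2^2) $ 2 $ 2 = 1"
  "(mat 1 :: 'a::zero_neq_one^2^2) $ 1 $ 2 = 0" "(mat 1 :: 'a::zero_neq_one^2^2) $ 2 $ 1 = 0"
  by (simp_all add: mat_def)

definition U :: "complex \<Rightarrow> complex \<Rightarrow> complex^2^2" where
  "U z w = (\<chi> i j. if i = 1 then (if j = 1 then z else - cnj w) else (if j = 1 then w else cnj z))"

lemma U_nth[simp]: "U z w $ 1 $ 1 = z" "U z w $ 1 $ 2 = - cnj w" "U z w $ 2 $ 1 = w" "U z w $ 2 $ 2 = cnj z"
  by (simp_all add: U_def)

lemma SU2_U: "A \<in> SU2 \<Longrightarrow> A = U (A$1$1) (A$2$1) \<and> A$1$1 * cnj (A$1$1) + A$2$1 * cnj (A$2$1) = 1"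
proof -
  assume "A \<in> SU2"
  then have h1: "A ** conj_transpose A = mat 1" and d: "det A = 1" by (auto simp: SU2_def)
  then have h2: "conj_transpose A ** A = mat 1" using matrix_left_right_inverse by blast
  define p q r s where "p = A$1$1" "q = A$1$2" "r = A$2$1" "s = A$2$2"
  have e1: "cnj p * p + cnj r * r = 1" "cnj p * q + cnj r * s = 0"
    using h2 unfolding eq2 mult2 ct2 mat1_2 p_q_r_s_def by auto
  have e3: "p * s - q * r = 1" using d unfolding det_2 p_q_r_s_def .
  have "s = cnj p" using e1 e3 by algebra
  moreover have "q = - cnj r" using e1 e3 by algebra
  ultimately show ?thesis using e1 unfolding eq2 p_q_r_s_def by (auto simp: mult.commute)
qed

definition Uq :: "real \<Rightarrow> real\<times>real\<times>real \<Rightarrow> complex^2^2" where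
  "Uq a0 v = (case v of (a1,a2,a3) \<Rightarrow> U (Complex a0 a1) (Complex a2 a3))"
definition nq :: "real \<Rightarrow> real\<times>real\<times>real \<Rightarrow> real" where
  "nq a0 v = (case v of (a1,a2,a3) \<Rightarrow> a0^2 + a1^2 + a2^2 + a3^2)"
definition Sc :: "real\<times>real\<times>real \<Rightarrow> real\<times>real\<times>real \<Rightarrow> real" where
  "Sc u v = (case u of (u1,u2,u3) \<Rightarrow> case v of (v1,v2,v3) \<Rightarrow>
     (u2 * v3 - u3 * v2)^2 + (u3 * v1 - u1 * v3)^2 + (u1 * v2 - u2 * v1)^2)"

lemma tr_comm_Uq:
  "Re (trace (Uq a0 a ** Uq b0 b ** conj_transpose (Uq a0 a) ** conj_transpose (Uq b0 b)))
    = 2 * nq a0 a * nq b0 b - 4 * Sc a b"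
  apply (cases a; cases b)
  apply (simp add: Uq_def nq_def Sc_def trace2 mult2 ct2 power2_eq_square)
  apply (simp add: algebra_simps)
  done

lemma tr_Uq: "Re (trace (Uq a0 a)) = 2 * a0"
  by (cases a) (simp add: Uq_def trace2)

lemma Uq_SU2: "nq a0 a = 1 \<Longrightarrow> Uq a0 a \<in> SU2"
  apply (cases a)
  by (simp add: SU2_def Uq_def nq_def eq2 mult2 ct2 mat1_2 det_2 complex_eq_iff power2_eq_square)

definition cd :: "complex^2^2 \<Rightarrow> real \<times> (real\<times>real\<times>real)" where
  "cd A = (Re (A$1$1), (Im (A$1$1), Re (A$2$1), Im (A$2$1)))"

lemma SU2_cd: "A \<in> SU2 \<Longrightarrow> A = Uq (fst (cd A)) (snd (cd A)) \<and> nq (fst (cd A)) (snd (cd A)) = 1"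
proof -
  assume "A \<in> SU2"
  from SU2_U[OF this] have 1: "A = U (A$1$1) (A$2$1)" and 2: "A$1$1 * cnj (A$1$1) + A$2$1 * cnj (A$2$1) = 1" by auto
  have "Re (A$1$1 * cnj (A$1$1) + A$2$1 * cnj (A$2$1)) = 1" using 2 by simp
  then have "nq (fst (cd A)) (snd (cd A)) = 1" by (simp add: cd_def nq_def power2_eq_square)
  moreover have "A = Uq (fst (cd A)) (snd (cd A))"
    apply (subst 1) by (simp add: cd_def Uq_def)
  ultimately show ?thesis by simp
qed

lemma SU2_inv: assumes "A \<in> SU2" shows "matrix_inv A = conj_transpose A"
proof -
  have h1: "A ** conj_transpose A = mat 1" using assms by (auto simp: SU2_def)
  then have h2: "conj_transpose A ** A = mat 1" using matrix_left_right_inverse by blast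
  let ?P = "\<lambda>B. A ** B = mat 1 \<and> B ** A = mat 1"
  have "?P (matrix_inv A)" unfolding matrix_inv_def by (rule someI[of ?P]) (use h1 h2 in blast)
  then have "matrix_inv A = matrix_inv A ** (A ** conj_transpose A)" using h1 by simp
  also have "\<dots> = conj_transpose A" using \<open>?P (matrix_inv A)\<close> by (simp add: matrix_mul_assoc)
  finally show ?thesis .
qed

definition Pi' :: "(complex^2^2) \<times> (complex^2^2) \<Rightarrow> real \<times> real" where
  "Pi' p = (Re (trace (fst p)), Re (trace (fst p ** snd p ** conj_transpose (fst p) ** conj_transpose (snd p))))"

lemma Pi_map_eq: "p \<in> SU2 \<times> SU2 \<Longrightarrow> Pi_map p = Pi' p"
  by (cases p) (auto simp: Pi_map_def Pi'_def SU2_inv)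

definition qprod :: "real \<times> (real\<times>real\<times>real) \<Rightarrow> real \<times> (real\<times>real\<times>real) \<Rightarrow> real \<times> (real\<times>real\<times>real)" where
  "qprod x y = (case x of (a0,a1,a2,a3) \<Rightarrow> case y of (h0,h1,h2,h3) \<Rightarrow>
     (a0*h0 - a1*h1 - a2*h2 - a3*h3, a0*h1 + a1*h0 - a2*h3 + a3*h2,
      a2*h0 - a3*h1 + a0*h2 + a1*h3, a2*h1 + a3*h0 + a0*h3 - a1*h2))"

lemma Uq_mult: "Uq a0 a ** Uq h0 h = Uq (fst (qprod (a0,a) (h0,h))) (snd (qprod (a0,a) (h0,h)))"
  apply (cases a; cases h)
  by (simp add: Uq_def qprod_def eq2 mult2 complex_eq_iff)

lemma nq_qprod: "nq (fst (qprod (a0,a) (h0,h))) (snd (qprod (a0,a) (h0,h))) = nq a0 a * nq h0 h"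
  apply (cases a; cases h)
  by (simp add: qprod_def nq_def power2_eq_square algebra_simps)

lemma Sc_scale: "Sc (k *\<^sub>R a) (l *\<^sub>R b) = k^2 * l^2 * Sc a b"
  apply (cases a; cases b)
  apply (simp add: Sc_def power2_eq_square)
  apply (simp add: algebra_simps)
  done

lemma nq_scale: "nq (k * a0) (k *\<^sub>R a) = k^2 * nq a0 a"
  by (cases a) (simp add: nq_def power2_eq_square algebra_simps)

lemma qprod_scale: "qprod (k * a0, k *\<^sub>R a) y = (k * fst (qprod (a0,a) y), k *\<^sub>R snd (qprod (a0,a) y))"
  by (cases a; cases y) (auto simp: qprod_def algebra_simps)

lemma Pi_Uq: "nq a0 a = 1 \<Longrightarrow> nq b0 b = 1 \<Longrightarrow> Pi' (Uq a0 a, Uq b0 b) = (2*a0, 2 - 4 * Sc a b)"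
  by (simp add: Pi'_def tr_comm_Uq tr_Uq)

lemma nq_split: "nq a0 a = a0^2 + nq 0 a"
  by (cases a) (simp add: nq_def)

lemma nq_nonneg: "0 \<le> nq a0 a"
  by (cases a) (simp add: nq_def)

lemma Sc_nonneg: "0 \<le> Sc a b"
  by (cases a; cases b) (simp add: Sc_def)

lemma lagrange: "Sc a b \<le> nq 0 a * nq 0 b"
proof -
  obtain a1 a2 a3 b1 b2 b3 where ab: "a = (a1,a2,a3)" "b = (b1,b2,b3)" by (cases a; cases b)
  have "nq 0 a * nq 0 b - Sc a b = (a1*b1+a2*b2+a3*b3)^2"
    by (simp add: ab nq_def Sc_def power2_eq_square algebra_simps)
  then show ?thesis by (metis diff_ge_0_iff_ge zero_le_power2)
qed

lemma image_sub1: "A \<in> SU2 \<Longrightarrow> B \<in> SU2 \<Longrightarrow> Pi_map (A,B) \<in> D_set"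
proof -
  assume AB: "A \<in> SU2" "B \<in> SU2"
  obtain a0 a b0 b where A: "A = Uq a0 a" "nq a0 a = 1" and B: "B = Uq b0 b" "nq b0 b = 1"
    using SU2_cd[OF AB(1)] SU2_cd[OF AB(2)] by metis
  have e: "Pi_map (A,B) = (2*a0, 2 - 4 * Sc a b)"
    using Pi_map_eq[of "(A,B)"] AB Pi_Uq A B by simp
  have na: "a0^2 + nq 0 a = 1" and nb: "b0^2 + nq 0 b = 1" using A B nq_split by metis+
  have "0 \<le> nq 0 a" "0 \<le> nq 0 b" by (rule nq_nonneg)+
  have s1: "Sc a b \<le> nq 0 a * nq 0 b" by (rule lagrange)
  have "nq 0 a * nq 0 b \<le> nq 0 a" using \<open>0 \<le> nq 0 a\<close> nb
    by (intro mult_left_le) (use zero_le_power2[of b0] in linarith)+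
  then have s2: "Sc a b \<le> nq 0 a" using s1 by linarith
  have s0: "0 \<le> Sc a b" by (rule Sc_nonneg)
  have "a0^2 \<le> 1" using na \<open>0 \<le> nq 0 a\<close> by linarith
  then have a01: "\<bar>a0\<bar> \<le> 1" by (simp add: abs_square_le_1)
  have sc1: "Sc a b \<le> 1" using s2 na zero_le_power2[of a0] by linarith
  have "(2*a0, 2 - 4 * Sc a b) \<in> D_set" unfolding D_set_def using s0 s2 na a01 sc1
    by (auto simp: power_mult_distrib abs_le_iff)
  then show "Pi_map (A,B) \<in> D_set" using e by simp
qed

lemma image_sub: "Pi_map ` (SU2 \<times> SU2) \<subseteq> D_set"
  using image_sub1 by auto

lemma image_sup: "D_set \<subseteq> Pi_map ` (SU2 \<times> SU2)"
proof safe
  fix x t assume "(x,t) \<in> D_set"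
  then have x: "-2 \<le> x" "x \<le> 2" and t: "-2 \<le> t" "t \<le> 2" "x^2 - 2 \<le> t" by (auto simp: D_set_def)
  have "0 \<le> (2 - x) * (2 + x)" using x by simp
  then have x2: "x^2 \<le> 4" by (simp add: power2_eq_square algebra_simps)
  define y where "y = sqrt (1 - x^2/4)"
  define c where "c = (if x^2 < 4 then sqrt ((2-t)/(4-x^2)) else 0)"
  have y2: "y^2 = 1 - x^2/4" using x2 by (simp add: y_def)
  have c2: "c^2 \<le> 1 \<and> (4 - x^2) * c^2 = 2 - t"
  proof (cases "x^2 < 4")
    case True
    then have c2e: "c^2 = (2-t)/(4-x^2)" using t by (simp add: c_def)
    have p: "0 < 4 - x^2" using True by simp
    have "c^2 \<le> 1" unfolding c2e using p t by (simp add: divide_le_eq_1)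
    moreover have "(4 - x^2) * c^2 = 2 - t" unfolding c2e using p by simp
    ultimately show ?thesis by simp
  next
    case False
    then show ?thesis using x2 t by (simp add: c_def)
  qed
  define A where "A = Uq (x/2) (y,0,0)"
  define B where "B = Uq (sqrt (1 - c^2)) (0,c,0)"
  have nA: "nq (x/2) (y,0,0) = 1" using y2 by (simp add: nq_def power_divide)
  have nB: "nq (sqrt (1 - c^2)) (0,c,0) = 1" using c2 by (simp add: nq_def)
  have "Sc (y,0,0) (0,c,0) = y^2 * c^2" by (simp add: Sc_def power_mult_distrib)
  moreover have "4*(y^2*c^2) = (4 - x^2)*c^2" unfolding y2 by (simp add: algebra_simps)
  then have "2 - 4 * (y^2 * c^2) = t" using c2 by linarith
  ultimately have "Pi' (A,B) = (x,t)" unfolding A_def B_def using Pi_Uq[OF nA nB] by simp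
  moreover have "A \<in> SU2" "B \<in> SU2" using Uq_SU2 nA nB A_def B_def by auto
  ultimately show "(x,t) \<in> Pi_map ` (SU2 \<times> SU2)" using Pi_map_eq
    by (metis SigmaI image_eqI)
qed

lemma image_eq: "Pi_map ` (SU2 \<times> SU2) = D_set"
  using image_sub image_sup by blast

lemma cont_U: "continuous_on S f \<Longrightarrow> continuous_on S g \<Longrightarrow> continuous_on S (\<lambda>x. U (f x) (g x))"
  unfolding U_def
  apply (intro continuous_on_vec_lambda)
  subgoal for i j by (cases "i = 1"; cases "j = 1") (simp_all add: continuous_intros)
  done

lemma cont_mm: "continuous_on S f \<Longrightarrow> continuous_on S g \<Longrightarrow> continuous_on S (\<lambda>x. (f x :: complex^2^2) ** g x)"
  unfolding matrix_matrix_mult_def by (intro continuous_intros)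

lemma cont_ct: "continuous_on S f \<Longrightarrow> continuous_on S (\<lambda>x. conj_transpose (f x))"
  unfolding conj_transpose_def by (intro continuous_intros)

lemma cont_tr: "continuous_on S f \<Longrightarrow> continuous_on S (\<lambda>x. trace (f x :: complex^2^2))"
  unfolding trace_def by (intro continuous_intros)

lemma cont_Pi': "continuous_on S f \<Longrightarrow> continuous_on S (\<lambda>x. Pi' (f x))"
  unfolding Pi'_def
  by (intro continuous_intros cont_tr cont_mm cont_ct) auto

lemma nq_alt: "nq a0 a = a0^2 + (fst a)^2 + (fst (snd a))^2 + (snd (snd a))^2"
  by (cases a) (simp add: nq_def)
lemma Uq_alt: "Uq a0 a = U (Complex a0 (fst a)) (Complex (fst (snd a)) (snd (snd a)))"
  by (cases a) (simp add: Uq_def)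
lemma Sc_alt: "Sc a b = (fst (snd a) * snd (snd b) - snd (snd a) * fst (snd b))^2
   + (snd (snd a) * fst b - fst a * snd (snd b))^2 + (fst a * fst (snd b) - fst (snd a) * fst b)^2"
  by (cases a; cases b) (simp add: Sc_def)

lemma cont_Uq: "continuous_on S f \<Longrightarrow> continuous_on S g \<Longrightarrow> continuous_on S (\<lambda>x. Uq (f x) (g x))"
  unfolding Uq_alt by (intro cont_U continuous_intros)

definition qm :: "real \<Rightarrow> real\<times>real\<times>real \<Rightarrow> complex^2^2" where
  "qm a0 a = Uq ((1 / sqrt (nq a0 a)) * a0) ((1 / sqrt (nq a0 a)) *\<^sub>R a)"

type_synonym T = "((real\<times>real\<times>real) \<times> (real\<times>real\<times>real)) \<times> (real \<times> real)"

definition Q :: "T \<Rightarrow> (complex^2^2) \<times> (complex^2^2)" where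
  "Q p = (qm (fst (snd p)) (fst (fst p)), qm (snd (snd p)) (snd (fst p)))"

definition PP :: "T set" where
  "PP = {p. nq (fst (snd p)) (fst (fst p)) \<noteq> 0 \<and> nq (snd (snd p)) (snd (fst p)) \<noteq> 0}"

definition Phi :: "T \<Rightarrow> real \<times> real" where
  "Phi p = (2 * fst (snd p) / sqrt (nq (fst (snd p)) (fst (fst p))),
            2 - 4 * Sc (fst (fst p)) (snd (fst p)) / (nq (fst (snd p)) (fst (fst p)) * nq (snd (snd p)) (snd (fst p))))"

definition Ry :: "(complex^2^2) \<times> (complex^2^2) \<Rightarrow> T \<Rightarrow> T" where
  "Ry y p = ((snd (qprod (fst (snd p), fst (fst p)) (cd (fst y))), snd (qprod (snd (snd p), snd (fst p)) (cd (snd y)))),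
             (fst (qprod (fst (snd p), fst (fst p)) (cd (fst y))), fst (qprod (snd (snd p), snd (fst p)) (cd (snd y)))))"

definition Lm :: "(complex^2^2) \<times> (complex^2^2) \<Rightarrow> (complex^2^2) \<times> (complex^2^2) \<Rightarrow> (complex^2^2) \<times> (complex^2^2)" where
  "Lm g x = (fst g ** fst x, snd g ** snd x)"

lemma nq_qm: "nq a0 a \<noteq> 0 \<Longrightarrow> nq ((1 / sqrt (nq a0 a)) * a0) ((1 / sqrt (nq a0 a)) *\<^sub>R a) = 1"
  using nq_scale[of "1 / sqrt (nq a0 a)" a0 a] nq_nonneg[of a0 a]
  by (simp add: power_divide)

lemma qm_SU2: "nq a0 a \<noteq> 0 \<Longrightarrow> qm a0 a \<in> SU2"
  unfolding qm_def by (rule Uq_SU2[OF nq_qm])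

lemma Q_SU2: "p \<in> PP \<Longrightarrow> Q p \<in> SU2 \<times> SU2"
  by (simp add: Q_def PP_def qm_SU2)

lemma Phi_eq: "p \<in> PP \<Longrightarrow> Pi' (Q p) = Phi p"
proof -
  assume p: "p \<in> PP"
  obtain a b a0 b0 where pe: "p = ((a,b),(a0,b0))" by (metis prod.collapse)
  have na: "nq a0 a \<noteq> 0" and nb: "nq b0 b \<noteq> 0" using p by (auto simp: PP_def pe)
  have ga: "nq a0 a > 0" using na nq_nonneg[of a0 a] by linarith
  have gb: "nq b0 b > 0" using nb nq_nonneg[of b0 b] by linarith
  have "Pi' (Q p) = (2 * ((1 / sqrt (nq a0 a)) * a0),
      2 - 4 * Sc ((1 / sqrt (nq a0 a)) *\<^sub>R a) ((1 / sqrt (nq b0 b)) *\<^sub>R b))"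
    unfolding Q_def pe prod.sel qm_def by (rule Pi_Uq[OF nq_qm[OF na] nq_qm[OF nb]])
  also have "\<dots> = Phi p"
    unfolding Sc_scale Phi_def pe using ga gb by (simp add: power_divide)
  finally show ?thesis .
qed

lemma qm_mult: assumes "nq a0 a \<noteq> 0" "nq h0 h = 1"
  shows "qm a0 a ** Uq h0 h = qm (fst (qprod (a0,a) (h0,h))) (snd (qprod (a0,a) (h0,h)))"
proof -
  have n: "nq (fst (qprod (a0,a) (h0,h))) (snd (qprod (a0,a) (h0,h))) = nq a0 a"
    using nq_qprod assms by simp
  show ?thesis unfolding qm_def Uq_mult qprod_scale n by simp
qed

lemma Lm_Q: assumes "p \<in> PP" "y \<in> SU2 \<times> SU2" shows "Lm (Q p) y = Q (Ry y p)"
proof -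
  obtain a b a0 b0 where pe: "p = ((a,b),(a0,b0))" by (metis prod.collapse)
  obtain A B where ye: "y = (A,B)" by fastforce
  have A: "A = Uq (fst (cd A)) (snd (cd A))" "nq (fst (cd A)) (snd (cd A)) = 1"
    and B: "B = Uq (fst (cd B)) (snd (cd B))" "nq (fst (cd B)) (snd (cd B)) = 1"
    using SU2_cd assms(2) ye by auto
  have na: "nq a0 a \<noteq> 0" and nb: "nq b0 b \<noteq> 0" using assms(1) by (auto simp: PP_def pe)
  have "qm a0 a ** A = qm (fst (qprod (a0,a) (cd A))) (snd (qprod (a0,a) (cd A)))"
    using qm_mult[OF na A(2)] A(1) by simp
  moreover have "qm b0 b ** B = qm (fst (qprod (b0,b) (cd B))) (snd (qprod (b0,b) (cd B)))"
    using qm_mult[OF nb B(2)] B(1) by simp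
  ultimately show ?thesis by (simp add: Lm_def Q_def Ry_def pe ye)
qed

lemma Ry_PP: assumes "y \<in> SU2 \<times> SU2" shows "Ry y p \<in> PP \<longleftrightarrow> p \<in> PP"
proof -
  obtain A B where ye: "y = (A,B)" by fastforce
  have "nq (fst (cd A)) (snd (cd A)) = 1" "nq (fst (cd B)) (snd (cd B)) = 1"
    using SU2_cd assms ye by auto
  then show ?thesis
    using nq_qprod[of "fst (snd p)" "fst (fst p)" "fst (cd A)" "snd (cd A)"]
      nq_qprod[of "snd (snd p)" "snd (fst p)" "fst (cd B)" "snd (cd B)"]
    by (simp add: PP_def Ry_def ye)
qed

lemma sq4: "(a::real)^2 + b^2 + c^2 + d^2 = 0 \<Longrightarrow> a = 0 \<and> b = 0 \<and> c = 0 \<and> d = 0"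
proof -
  assume h: "a^2 + b^2 + c^2 + d^2 = 0"
  have "a^2 \<le> 0" "b^2 \<le> 0" "c^2 \<le> 0" "d^2 \<le> 0"
    using h zero_le_power2[of a] zero_le_power2[of b] zero_le_power2[of c] zero_le_power2[of d] by linarith+
  then show ?thesis by simp
qed

lemma linear_Ry: "linear (Ry y)"
  apply (rule linearI)
  apply (simp_all add: Ry_def qprod_def split: prod.splits)
  apply (auto simp: algebra_simps)
  done

lemma inj_Ry: assumes "y \<in> SU2 \<times> SU2" shows "inj (Ry y)"
proof -
  obtain A B where ye: "y = (A,B)" by fastforce
  have 1: "nq (fst (cd A)) (snd (cd A)) = 1" "nq (fst (cd B)) (snd (cd B)) = 1"
    using SU2_cd assms ye by auto
  have "p = 0" if "Ry y p = 0" for p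
  proof -
    have "nq (fst (snd p)) (fst (fst p)) = 0" "nq (snd (snd p)) (snd (fst p)) = 0"
      using that 1 nq_qprod[of "fst (snd p)" "fst (fst p)" "fst (cd A)" "snd (cd A)"]
        nq_qprod[of "snd (snd p)" "snd (fst p)" "fst (cd B)" "snd (cd B)"]
      by (auto simp: Ry_def ye nq_alt prod_eq_iff)
    then show "p = 0" unfolding nq_alt by (auto simp: prod_eq_iff dest!: sq4)
  qed
  then show ?thesis using linear_injective_0[OF linear_Ry] by blast
qed

lemma open_cont_borel:
  assumes "open S" "continuous_on S f" "E \<in> sets borel"
  shows "{x\<in>S. f x \<in> E} \<in> sets borel"
proof -
  have "f \<in> borel_measurable (restrict_space borel S)"
    by (rule borel_measurable_continuous_on_restrict[OF assms(2)])
  then have "f -` E \<inter> space (restrict_space borel S) \<in> sets (restrict_space borel S)"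
    using measurable_sets assms(3) by blast
  moreover have "space (restrict_space borel S) = S" by (simp add: space_restrict_space)
  ultimately have "f -` E \<inter> S \<in> sets (restrict_space borel S)" by simp
  then have "f -` E \<inter> S \<in> sets borel"
    using sets_restrict_space_iff[of S borel] assms(1) by auto
  moreover have "{x\<in>S. f x \<in> E} = f -` E \<inter> S" by auto
  ultimately show ?thesis by simp
qed

lemma negl_lborel: "X \<in> sets borel \<Longrightarrow> emeasure lborel X = 0 \<longleftrightarrow> negligible X"
  by (simp add: negligible_iff_null_sets null_sets_completion_iff null_sets_def)

lemma negl_linear:
  fixes f :: "'a::euclidean_space \<Rightarrow> 'a"
  assumes "linear f" "inj f"
  shows "negligible (f -` X) \<longleftrightarrow> negligible X"
proof -
  obtain g where g: "linear g" "\<And>x. g (f x) = x" "\<And>x. f (g x) = x"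
    using linear_injective_isomorphism[OF assms] by blast
  have 1: "f -` X = g ` X" using g by (auto simp: image_iff) (metis)
  have 2: "X = f ` (f -` X)" using g by (auto simp: image_iff) (metis)
  show ?thesis
  proof
    assume "negligible (f -` X)"
    then have "negligible (f ` (f -` X))"
      by (intro negligible_differentiable_image_negligible linear_imp_differentiable_on assms) auto
    then show "negligible X" using 2 by simp
  next
    assume "negligible X"
    then have "negligible (g ` X)"
      by (intro negligible_differentiable_image_negligible linear_imp_differentiable_on g) auto
    then show "negligible (f -` X)" using 1 by simp
  qed
qed

lemma open_pos:
  fixes S :: "'a::euclidean_space set"
  assumes "open S" "x \<in> S" shows "emeasure lborel S > 0"
proof -
  obtain e where e: "e > 0" "ball x e \<subseteq> S" using assms open_contains_ball by blast
  have "0 < ennreal (unit_ball_vol (real DIM('a)) * e ^ DIM('a))" using e by simp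
  also have "\<dots> = emeasure lborel (ball x e)" using e(1) by (simp add: emeasure_ball)
  also have "\<dots> \<le> emeasure lborel S" by (rule emeasure_mono[OF e(2)]) (simp add: assms(1) borel_open)
  finally show ?thesis .
qed

lemma SU2_mult: "A \<in> SU2 \<Longrightarrow> B \<in> SU2 \<Longrightarrow> A ** B \<in> SU2"
proof -
  assume "A \<in> SU2" "B \<in> SU2"
  then obtain a0 a b0 b where A: "A = Uq a0 a" "nq a0 a = 1" and B: "B = Uq b0 b" "nq b0 b = 1"
    using SU2_cd by metis
  have "A ** B = Uq (fst (qprod (a0,a) (b0,b))) (snd (qprod (a0,a) (b0,b)))" using A B Uq_mult by simp
  moreover have "nq (fst (qprod (a0,a) (b0,b))) (snd (qprod (a0,a) (b0,b))) = 1" using nq_qprod A B by simp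
  ultimately show ?thesis using Uq_SU2 by simp
qed

lemma cont_nq: "continuous_on S f \<Longrightarrow> continuous_on S g \<Longrightarrow> continuous_on S (\<lambda>x. nq (f x) (g x))"
  unfolding nq_alt by (intro continuous_intros)
lemma cont_Sc: "continuous_on S f \<Longrightarrow> continuous_on S g \<Longrightarrow> continuous_on S (\<lambda>x. Sc (f x) (g x))"
  unfolding Sc_alt by (intro continuous_intros)

lemma cont_qm: "continuous_on S f \<Longrightarrow> continuous_on S g \<Longrightarrow> (\<forall>x\<in>S. nq (f x) (g x) \<noteq> 0)
   \<Longrightarrow> continuous_on S (\<lambda>x. qm (f x) (g x))"
  unfolding qm_def
  apply (intro cont_Uq continuous_intros cont_nq)
  apply (simp_all add: nq_alt[symmetric])
  done

lemma cont_Q: "continuous_on S f \<Longrightarrow> (\<forall>x\<in>S. f x \<in> PP) \<Longrightarrow> continuous_on S (\<lambda>x. Q (f x))"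
  unfolding Q_def PP_def by (intro continuous_intros cont_qm) auto

lemma open_PP: "open PP"
proof -
  have eq: "PP = {p. nq (fst (snd p)) (fst (fst p)) \<noteq> 0} \<inter> {p. nq (snd (snd p)) (snd (fst p)) \<noteq> 0}"
    by (auto simp: PP_def)
  have o1: "open {p::T. nq (fst (snd p)) (fst (fst p)) \<noteq> 0}"
    unfolding nq_alt by (intro open_Collect_neq continuous_intros)
  have o2: "open {p::T. nq (snd (snd p)) (snd (fst p)) \<noteq> 0}"
    unfolding nq_alt by (intro open_Collect_neq continuous_intros)
  show ?thesis unfolding eq by (rule open_Int[OF o1 o2])
qed

lemma cont_Phi: "continuous_on PP Phi"
  unfolding Phi_def
  apply (intro continuous_on_Pair continuous_on_divide continuous_on_mult continuous_on_diff continuous_on_const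
     continuous_on_fst continuous_on_snd continuous_on_id continuous_on_real_sqrt cont_nq cont_Sc)
  apply (simp_all add: PP_def)
  done

lemma haar_transfer:
  assumes h: "haar_SU2_sq \<mu>" and E: "E \<in> sets borel"
  shows "emeasure \<mu> (Pi_map -` E \<inter> space \<mu>) = 0 \<longleftrightarrow> emeasure lborel {p \<in> PP. Phi p \<in> E} = 0"
proof -
  let ?K = "SU2 \<times> SU2"
  have sp: "space \<mu> = ?K" and st: "sets \<mu> = sets (restrict_space borel ?K)" and fin: "finite_measure \<mu>"
    and nz: "emeasure \<mu> (space \<mu>) \<noteq> 0"
    and inv: "\<And>g A. g \<in> ?K \<Longrightarrow> A \<in> sets \<mu> \<Longrightarrow> emeasure \<mu> (Lm g -` A \<inter> space \<mu>) = emeasure \<mu> A"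
    using h unfolding haar_SU2_sq_def Lm_def by auto
  interpret fm: finite_measure \<mu> by (rule fin)
  interpret ps: pair_sigma_finite lborel \<mu> by unfold_locales
  define F where "F = {y \<in> ?K. Pi' y \<in> E}"
  have PiE: "Pi_map -` E \<inter> space \<mu> = F" using Pi_map_eq sp by (auto simp: F_def)
  have cPi: "continuous_on UNIV Pi'" using cont_Pi'[OF continuous_on_id] by simp
  have "Pi' -` E \<in> sets borel" using borel_measurable_continuous_onI[OF cPi] E by (simp add: measurable_sets_borel)
  then have Fm: "F \<in> sets \<mu>" unfolding st sets_restrict_space F_def by (auto simp: image_iff)
  define N where "N = {p \<in> PP. Phi p \<in> E}"
  have Nm: "N \<in> sets borel" unfolding N_def by (rule open_cont_borel[OF open_PP cont_Phi E])
  define G where "G = {z \<in> PP \<times> UNIV. Pi' (Lm (Q (fst z)) (snd z)) \<in> E}"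
  have cG: "continuous_on (PP \<times> UNIV) (\<lambda>z. Pi' (Lm (Q (fst z)) (snd z)))"
    unfolding Lm_def
    by (intro cont_Pi' continuous_on_Pair cont_mm continuous_on_fst continuous_on_snd cont_Q continuous_on_id) auto
  have Gm: "G \<in> sets borel" unfolding G_def
    by (rule open_cont_borel[OF _ cG E]) (simp add: open_PP open_Times)
  have idm: "(\<lambda>z. z) \<in> measurable (lborel \<Otimes>\<^sub>M \<mu>) borel"
  proof -
    have "(\<lambda>z. z) \<in> measurable \<mu> borel"
      by (subst measurable_cong_sets[OF st refl]) (rule measurable_restrict_space1, simp)
    then have "(\<lambda>z. (fst z, snd z)) \<in> measurable (lborel \<Otimes>\<^sub>M \<mu>) (borel \<Otimes>\<^sub>M borel)"
      by (intro measurable_Pair) (auto intro: measurable_compose[OF measurable_snd] measurable_compose[OF measurable_fst])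
    then show ?thesis by (simp add: borel_prod)
  qed
  have fm: "(\<lambda>z. indicator G z :: ennreal) \<in> borel_measurable (lborel \<Otimes>\<^sub>M \<mu>)"
    using measurable_compose[OF idm borel_measurable_indicator[OF Gm]] by simp
  have fub: "(\<integral>\<^sup>+ y. (\<integral>\<^sup>+ p. indicator G (p,y) \<partial>lborel) \<partial>\<mu>) = (\<integral>\<^sup>+ p. (\<integral>\<^sup>+ y. indicator G (p,y) \<partial>\<mu>) \<partial>lborel)"
    by (rule ps.Fubini') (use fm in simp)
  have inner1: "(\<integral>\<^sup>+ y. indicator G (p,y) \<partial>\<mu>) = emeasure \<mu> F * indicator PP p" for p
  proof (cases "p \<in> PP")
    case True
    have QK: "Q p \<in> ?K" using Q_SU2[OF True] .
    have cL: "continuous_on UNIV (\<lambda>y. Pi' (Lm (Q p) y))"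
      unfolding Lm_def by (intro cont_Pi' continuous_on_Pair cont_mm continuous_on_fst continuous_on_snd continuous_on_const continuous_on_id)
    have "(\<lambda>y. Pi' (Lm (Q p) y)) -` E \<in> sets borel"
      using borel_measurable_continuous_onI[OF cL] E by (simp add: measurable_sets_borel)
    then have sm: "Lm (Q p) -` F \<inter> space \<mu> \<in> sets \<mu>"
    proof -
      assume a: "(\<lambda>y. Pi' (Lm (Q p) y)) -` E \<in> sets borel"
      have "Lm (Q p) -` F \<inter> space \<mu> = ?K \<inter> (\<lambda>y. Pi' (Lm (Q p) y)) -` E"
        using QK SU2_mult by (auto simp: F_def sp Lm_def)
      then show ?thesis using a unfolding st sets_restrict_space by auto
    qed
    have "(\<integral>\<^sup>+ y. indicator G (p,y) \<partial>\<mu>) = (\<integral>\<^sup>+ y. indicator (Lm (Q p) -` F \<inter> space \<mu>) y \<partial>\<mu>)"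
    proof (rule nn_integral_cong)
      fix y assume "y \<in> space \<mu>"
      then have "Lm (Q p) y \<in> ?K" using QK SU2_mult sp by (auto simp: Lm_def)
      then show "indicator G (p,y) = (indicator (Lm (Q p) -` F \<inter> space \<mu>) y :: ennreal)"
        using True \<open>y \<in> space \<mu>\<close> by (auto simp: G_def F_def indicator_def)
    qed
    also have "\<dots> = emeasure \<mu> F" using sm inv[OF QK Fm] by simp
    finally show ?thesis using True by simp
  next
    case False
    then show ?thesis by (simp add: G_def indicator_def)
  qed
  have inner2: "(\<integral>\<^sup>+ p. indicator G (p,y) \<partial>lborel) = emeasure lborel (Ry y -` N)" if y: "y \<in> space \<mu>" for y
  proof -
    have yK: "y \<in> ?K" using y sp by simp
    have "indicator G (p,y) = (indicator (Ry y -` N) p :: ennreal)" for p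
    proof -
      have "(p,y) \<in> G \<longleftrightarrow> Ry y p \<in> N"
      proof (cases "p \<in> PP")
        case True
        then show ?thesis using Lm_Q[OF True yK] Phi_eq Ry_PP[OF yK] by (simp add: G_def N_def)
      next
        case False
        then show ?thesis using Ry_PP[OF yK] by (simp add: G_def N_def)
      qed
      then show ?thesis by (simp add: indicator_def)
    qed
    then have "(\<integral>\<^sup>+ p. indicator G (p,y) \<partial>lborel) = (\<integral>\<^sup>+ p. indicator (Ry y -` N) p \<partial>lborel)" by simp
    also have "\<dots> = emeasure lborel (Ry y -` N)"
    proof -
      have "continuous_on UNIV (Ry y)" using linear_Ry linear_continuous_on linear_conv_bounded_linear by blast
      then have "Ry y -` N \<in> sets borel" by (rule measurable_sets_borel[OF borel_measurable_continuous_onI Nm])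
      then show ?thesis by simp
    qed
    finally show ?thesis .
  qed
  have zero_iff: "emeasure lborel (Ry y -` N) = 0 \<longleftrightarrow> emeasure lborel N = 0" if y: "y \<in> space \<mu>" for y
  proof -
    have yK: "y \<in> ?K" using y sp by simp
    have "continuous_on UNIV (Ry y)" using linear_Ry linear_continuous_on linear_conv_bounded_linear by blast
    then have "Ry y -` N \<in> sets borel" by (rule measurable_sets_borel[OF borel_measurable_continuous_onI Nm])
    then show ?thesis by (simp only: negl_lborel[OF \<open>Ry y -` N \<in> sets borel\<close>] negl_lborel[OF Nm] negl_linear[OF linear_Ry inj_Ry[OF yK]])
  qed
  have rhs: "(\<integral>\<^sup>+ p. (\<integral>\<^sup>+ y. indicator G (p,y) \<partial>\<mu>) \<partial>lborel) = emeasure \<mu> F * emeasure lborel PP"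
    unfolding inner1 using open_PP by (simp add: nn_integral_cmult_indicator borel_open)
  have lhs_meas: "(\<lambda>y. \<integral>\<^sup>+ p. indicator G (p,y) \<partial>lborel) \<in> borel_measurable \<mu>"
  proof -
    have "(\<lambda>(y,p). indicator G (p,y) :: ennreal) \<in> borel_measurable (\<mu> \<Otimes>\<^sub>M lborel)"
      using measurable_pair_swap[OF fm] by simp
    then show ?thesis using lborel.borel_measurable_nn_integral[of "\<lambda>y p. indicator G (p,y)" \<mu>] by simp
  qed
  have PPpos: "emeasure lborel PP \<noteq> 0"
  proof -
    have "((0,0),(1,1)) \<in> PP" by (simp add: PP_def nq_alt)
    from open_pos[OF open_PP this] show ?thesis by simp
  qed
  show ?thesis unfolding N_def[symmetric]
  proof
    assume "emeasure \<mu> (Pi_map -` E \<inter> space \<mu>) = 0"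
    then have "emeasure \<mu> F = 0" using PiE by simp
    then have "(\<integral>\<^sup>+ y. (\<integral>\<^sup>+ p. indicator G (p,y) \<partial>lborel) \<partial>\<mu>) = 0" using fub rhs by simp
    then have ae: "AE y in \<mu>. (\<integral>\<^sup>+ p. indicator G (p,y) \<partial>lborel) = 0"
      using nn_integral_0_iff_AE[OF lhs_meas] by simp
    show "emeasure lborel N = 0"
    proof (rule ccontr)
      assume "emeasure lborel N \<noteq> 0"
      then have "\<forall>y\<in>space \<mu>. (\<integral>\<^sup>+ p. indicator G (p,y) \<partial>lborel) \<noteq> 0"
        using inner2 zero_iff by simp
      then have "AE y in \<mu>. False" using ae by (auto elim: AE_mp intro: AE_I2)
      then obtain N0 where "N0 \<in> null_sets \<mu>" "space \<mu> \<subseteq> N0" by (auto elim!: AE_E)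
      then have "emeasure \<mu> (space \<mu>) = 0"
        by (meson null_setsD1 null_sets_subset sets.top)
      then show False using nz by simp
    qed
  next
    assume N0: "emeasure lborel N = 0"
    have "(\<integral>\<^sup>+ y. (\<integral>\<^sup>+ p. indicator G (p,y) \<partial>lborel) \<partial>\<mu>) = (\<integral>\<^sup>+ y. 0 \<partial>\<mu>)"
      by (rule nn_integral_cong) (simp add: inner2 zero_iff N0)
    then have "emeasure \<mu> F * emeasure lborel PP = 0" using fub rhs by simp
    then have "emeasure \<mu> F = 0" using PPpos by simp
    then show "emeasure \<mu> (Pi_map -` E \<inter> space \<mu>) = 0" using PiE by simp
  qed
qed

lemma null_transfer:
  fixes f g :: "'a::euclidean_space \<Rightarrow> 'a"
  assumes "f differentiable_on S" "g differentiable_on V"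
    "\<And>x. x \<in> S \<Longrightarrow> f x \<in> V \<and> g (f x) = x" "\<And>y. y \<in> V \<Longrightarrow> g y \<in> S \<and> f (g y) = y"
  shows "negligible {x\<in>S. f x \<in> H} \<longleftrightarrow> negligible (V \<inter> H)"
proof -
  have 1: "{x\<in>S. f x \<in> H} = g ` (V \<inter> H)"
  proof
    show "{x\<in>S. f x \<in> H} \<subseteq> g ` (V \<inter> H)"
      using assms(3) by (auto simp: image_iff) (metis IntI)
    show "g ` (V \<inter> H) \<subseteq> {x\<in>S. f x \<in> H}" using assms(4) by auto
  qed
  have 2: "V \<inter> H = f ` {x\<in>S. f x \<in> H}"
  proof
    show "V \<inter> H \<subseteq> f ` {x\<in>S. f x \<in> H}" using assms(4) by (auto simp: image_iff) (metis)
    show "f ` {x\<in>S. f x \<in> H} \<subseteq> V \<inter> H" using assms(3) by auto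
  qed
  show ?thesis
  proof
    assume "negligible {x\<in>S. f x \<in> H}"
    then have "negligible (f ` {x\<in>S. f x \<in> H})"
      by (intro negligible_differentiable_image_negligible differentiable_on_subset[OF assms(1)]) auto
    then show "negligible (V \<inter> H)" using 2 by simp
  next
    assume "negligible (V \<inter> H)"
    then have "negligible (g ` (V \<inter> H))"
      by (intro negligible_differentiable_image_negligible differentiable_on_subset[OF assms(2)]) auto
    then show "negligible {x\<in>S. f x \<in> H}" using 1 by simp
  qed
qed

lemma diffI: "(\<And>x. x \<in> S \<Longrightarrow> \<exists>D. (f has_real_derivative D) (at x)) \<Longrightarrow> f differentiable_on S"
  unfolding differentiable_on_def real_differentiable_def
  by (meson has_field_derivative_at_within)

definition xf :: "real \<Rightarrow> real \<Rightarrow> real" where "xf A2 a = 2 * a / sqrt (a^2 + A2)"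
definition xg :: "real \<Rightarrow> real \<Rightarrow> real" where "xg A2 y = sqrt A2 * y / sqrt (4 - y^2)"

lemma d_sqrt: fixes f :: "real \<Rightarrow> real"
  assumes "f differentiable (at x)" "f x > 0" shows "(\<lambda>x. sqrt (f x)) differentiable (at x)"
proof -
  obtain g' where "(f has_derivative g') (at x)" using assms(1) differentiable_def by blast
  then show ?thesis unfolding differentiable_def using has_derivative_real_sqrt assms(2) by blast
qed

lemma pos_sq[simp]: "0 < A \<Longrightarrow> 0 < x^2 + (A::real)" "0 < A \<Longrightarrow> x^2 + (A::real) \<noteq> 0"
  by (simp_all add: add_nonneg_pos add_nonneg_pos[THEN less_imp_neq, THEN not_sym])

lemmas dintros = differentiable_divide differentiable_mult differentiable_const differentiable_ident
   d_sqrt differentiable_add differentiable_power differentiable_diff differentiable_minus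

lemma xf_diff: "A2 > 0 \<Longrightarrow> xf A2 differentiable_on UNIV"
  unfolding xf_def
  by (intro differentiable_at_imp_differentiable_on dintros) (auto simp: add_nonneg_pos)

lemma sq_lt4: "-2 < x \<Longrightarrow> x < 2 \<Longrightarrow> x^2 < (4::real)"
proof -
  assume "-2 < x" "x < 2"
  then have "0 < (2-x)*(2+x)" by simp
  then show ?thesis by (simp add: power2_eq_square algebra_simps)
qed

lemma sq_lt4_iff: "x^2 < (4::real) \<longleftrightarrow> -2 < x \<and> x < 2"
proof
  assume "x^2 < 4"
  then have "\<bar>x\<bar>^2 < 2^2" by simp
  then have "\<bar>x\<bar> < 2" by (rule power_less_imp_less_base) simp
  then show "-2 < x \<and> x < 2" by linarith
qed (use sq_lt4 in blast)

lemma xg_diff: "xg A2 differentiable_on {-2<..<2}"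
  unfolding xg_def
  by (intro differentiable_at_imp_differentiable_on dintros) (auto dest!: sq_lt4)

lemma xf_range: assumes "A2 > 0" shows "-2 < xf A2 a \<and> xf A2 a < 2"
proof -
  have "sqrt (a^2) < sqrt (a^2 + A2)" using assms by (intro real_sqrt_less_mono) simp
  then have l: "\<bar>a\<bar> < sqrt (a^2 + A2)" by simp
  have p: "0 < sqrt (a^2 + A2)" using assms by (simp add: add_nonneg_pos)
  have "\<bar>xf A2 a\<bar> = 2 * \<bar>a\<bar> / sqrt (a^2 + A2)" unfolding xf_def using p by (simp add: abs_mult)
  also have "\<dots> < 2" using l p by (simp add: divide_less_eq)
  finally show ?thesis by linarith
qed

lemma xg_xf: assumes "A2 > 0" shows "xg A2 (xf A2 a) = a"
proof -
  define s where "s = sqrt (a^2 + A2)"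
  have p: "0 < s" using assms by (simp add: add_nonneg_pos s_def)
  have s2: "s^2 = a^2 + A2" using assms by (simp add: s_def add_nonneg_pos less_imp_le)
  have q: "sqrt A2 * sqrt A2 = A2" using assms by simp
  have qp: "sqrt A2 > 0" using assms by simp
  have "4 - (xf A2 a)^2 = 4 - 4 * a^2 / s^2" unfolding xf_def s_def[symmetric] by (simp add: power_divide power_mult_distrib)
  also have "\<dots> = 4 * A2 / s^2"
  proof -
    have "4 * a^2 / s^2 + 4 * A2 / s^2 = (4 * (a^2 + A2)) / s^2" by (simp add: add_divide_distrib algebra_simps)
    also have "\<dots> = 4" by (subst s2[symmetric]) (use p in simp)
    finally show ?thesis by linarith
  qed
  also have "\<dots> = (2 * sqrt A2 / s)^2" using q by (simp add: power_divide power_mult_distrib power2_eq_square)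
  finally have "4 - (xf A2 a)^2 = (2 * sqrt A2 / s)^2" .
  then have sq: "sqrt (4 - (xf A2 a)^2) = 2 * sqrt A2 / s" using p qp by simp
  have "xg A2 (xf A2 a) = sqrt A2 * xf A2 a / (2 * sqrt A2 / s)" by (simp only: xg_def sq)
  also have "\<dots> = a" unfolding xf_def s_def[symmetric] using p qp by (simp add: field_simps)
  finally show ?thesis .
qed

lemma xf_xg: assumes "A2 > 0" "-2 < y" "y < 2" shows "xf A2 (xg A2 y) = y"
proof -
  define r where "r = sqrt (4 - y^2)"
  have y4: "y^2 < 4" using sq_lt4 assms by blast
  have p: "0 < r" using y4 by (simp add: r_def)
  have r2: "r^2 = 4 - y^2" using y4 by (simp add: r_def)
  have q: "sqrt A2 * sqrt A2 = A2" using assms by simp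
  have qp: "sqrt A2 > 0" using assms by simp
  have "(xg A2 y)^2 + A2 = A2 * y^2 / r^2 + A2" unfolding xg_def r_def[symmetric] using q
    by (simp add: power_divide power_mult_distrib power2_eq_square)
  also have "\<dots> = 4 * A2 / r^2"
  proof -
    have "A2 * y^2 / r^2 + A2 * r^2 / r^2 = A2 * (y^2 + r^2) / r^2" by (simp add: add_divide_distrib algebra_simps)
    moreover have "A2 * r^2 / r^2 = A2" using p by simp
    moreover have "y^2 + r^2 = 4" using r2 by simp
    ultimately show ?thesis by (simp add: mult.commute)
  qed
  also have "\<dots> = (2 * sqrt A2 / r)^2" using q by (simp add: power_divide power_mult_distrib power2_eq_square)
  finally have "(xg A2 y)^2 + A2 = (2 * sqrt A2 / r)^2" .
  then have "sqrt ((xg A2 y)^2 + A2) = 2 * sqrt A2 / r" using p qp by simp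
  then show ?thesis unfolding xf_def using p qp by (simp add: xg_def r_def[symmetric] field_simps)
qed

lemma x1D: assumes "A2 > 0"
  shows "negligible {a. xf A2 a \<in> H} \<longleftrightarrow> negligible ({-2<..<2} \<inter> H)"
  using null_transfer[of "xf A2" UNIV "xg A2" "{-2<..<2}" H] xf_diff[OF assms] xg_diff
    xf_range[OF assms] xg_xf[OF assms] xf_xg[OF assms]
  by auto

definition tf :: "real \<Rightarrow> real \<Rightarrow> real \<Rightarrow> real" where "tf c B2 b = 2 - c / (b^2 + B2)"
definition tg :: "real \<Rightarrow> real \<Rightarrow> real \<Rightarrow> real" where "tg c B2 t = sqrt (c / (2 - t) - B2)"

lemma tf_diff: "B2 > 0 \<Longrightarrow> tf c B2 differentiable_on S"
  unfolding tf_def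
  by (intro differentiable_at_imp_differentiable_on dintros) (auto simp: add_nonneg_pos)

lemma tV: fixes c :: real assumes "c > 0" "B2 > 0" "t \<in> {2 - c/B2<..<2}"
  shows "B2 < c / (2 - t)"
proof -
  have "2 - t < c / B2" "0 < 2 - t" using assms by auto
  then have "(2 - t) * B2 < c" using assms by (simp add: less_divide_eq)
  then show ?thesis using \<open>0 < 2 - t\<close> by (simp add: less_divide_eq mult.commute)
qed

lemma tg_diff: assumes "c > 0" "B2 > 0" shows "tg c B2 differentiable_on {2 - c/B2<..<2}"
  unfolding tg_def
  by (intro differentiable_at_imp_differentiable_on dintros) (use tV[OF assms] in auto)

lemma tg_diff': assumes "c > 0" "B2 > 0" shows "(\<lambda>t. - tg c B2 t) differentiable_on {2 - c/B2<..<2}"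
  unfolding tg_def
  by (intro differentiable_at_imp_differentiable_on dintros) (use tV[OF assms] in auto)

lemma tf_range: assumes "c > 0" "B2 > 0" "b \<noteq> 0" shows "tf c B2 b \<in> {2 - c/B2<..<2}"
proof -
  have b2: "0 < b^2" using assms by simp
  have "c / (b^2 + B2) < c / B2" using assms b2 by (intro divide_strict_left_mono) auto
  moreover have "0 < c / (b^2 + B2)" using assms b2 by simp
  ultimately show ?thesis by (simp add: tf_def)
qed

lemma tg_tf: assumes "c > 0" "B2 > 0" shows "tg c B2 (tf c B2 b) = \<bar>b\<bar>"
proof -
  have p: "0 < b^2 + B2" using assms by (simp add: add_nonneg_pos)
  have "c / (2 - tf c B2 b) = b^2 + B2" using assms p by (simp add: tf_def)
  then show ?thesis by (simp add: tg_def)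
qed

lemma tf_tg: assumes "c > 0" "B2 > 0" "t \<in> {2 - c/B2<..<2}"
  shows "tg c B2 t > 0 \<and> tf c B2 (tg c B2 t) = t \<and> tf c B2 (- tg c B2 t) = t"
proof -
  have l: "B2 < c / (2 - t)" by (rule tV[OF assms])
  have "tg c B2 t > 0" using l by (simp add: tg_def)
  moreover have "(tg c B2 t)^2 = c / (2 - t) - B2" using l by (simp add: tg_def)
  then have "(tg c B2 t)^2 + B2 = c / (2 - t)" by simp
  then have "tf c B2 (tg c B2 t) = t" using assms by (simp add: tf_def)
  ultimately show ?thesis by (simp add: tf_def)
qed

lemma t1D: assumes "c > 0" "B2 > 0"
  shows "negligible {b. tf c B2 b \<in> G} \<longleftrightarrow> negligible ({2 - c/B2<..<2} \<inter> G)"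
proof -
  let ?V = "{2 - c/B2<..<2}"
  have e: "{b. tf c B2 b \<in> G} = {b\<in>{0<..}. tf c B2 b \<in> G} \<union> {b\<in>{..<0}. tf c B2 b \<in> G} \<union> {b. b = 0 \<and> tf c B2 b \<in> G}"
    by auto
  have n3: "negligible {b. b = 0 \<and> tf c B2 b \<in> G}"
    by (rule negligible_subset[of "{0}"]) auto
  have n1: "negligible {b\<in>{0<..}. tf c B2 b \<in> G} \<longleftrightarrow> negligible (?V \<inter> G)"
    by (rule null_transfer[OF tf_diff[OF assms(2)] tg_diff[OF assms]])
       (use tf_range[OF assms] tg_tf[OF assms] tf_tg[OF assms] in auto)
  have n2: "negligible {b\<in>{..<0}. tf c B2 b \<in> G} \<longleftrightarrow> negligible (?V \<inter> G)"
    by (rule null_transfer[OF tf_diff[OF assms(2)] tg_diff'[OF assms]])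
       (use tf_range[OF assms] tg_tf[OF assms] tf_tg[OF assms] in auto)
  show ?thesis unfolding e using n1 n2 n3 by simp
qed

lemma sets_pp: "X \<in> sets borel \<Longrightarrow> X \<in> sets (lborel \<Otimes>\<^sub>M (lborel :: 'b::euclidean_space measure) :: ('a::euclidean_space \<times> 'b) measure)"
  by (subst lborel_prod) simp

lemma sec_borel: fixes X :: "('a::euclidean_space \<times> 'b::euclidean_space) set"
  shows "X \<in> sets borel \<Longrightarrow> Pair x -` X \<in> sets borel"
  using sets_Pair1[OF sets_pp] by (metis sets_lborel)

lemma lborel_pair_zero: fixes X :: "('a::euclidean_space \<times> 'b::euclidean_space) set"
  assumes "X \<in> sets borel"
  shows "emeasure lborel X = 0 \<longleftrightarrow> (AE x in lborel. emeasure lborel (Pair x -` X) = 0)"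
proof -
  have "emeasure (lborel \<Otimes>\<^sub>M lborel) X = (\<integral>\<^sup>+x. emeasure lborel (Pair x -` X) \<partial>lborel)"
    by (rule lborel.emeasure_pair_measure_alt[OF sets_pp[OF assms]])
  then have e: "emeasure lborel X = (\<integral>\<^sup>+x. emeasure lborel (Pair x -` X) \<partial>lborel)" by (simp add: lborel_prod)
  have m: "(\<lambda>x. emeasure lborel (Pair x -` X)) \<in> borel_measurable lborel"
    by (rule lborel.measurable_emeasure_Pair[OF sets_pp[OF assms]])
  show ?thesis unfolding e using nn_integral_0_iff_AE[OF m] .
qed

definition Ds :: "real \<Rightarrow> (real \<times> real) set" where
  "Ds s = {z. 2 - s * (4 - (fst z)^2) < snd z \<and> snd z < 2}"

lemma Ds_borel: "Ds s \<in> sets borel"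
proof -
  have "open (Ds s)" unfolding Ds_def
    by (intro open_Collect_conj open_Collect_less continuous_intros)
  then show ?thesis by (rule borel_open)
qed

lemma Ds_pos: "z \<in> Ds s \<Longrightarrow> s > 0 \<Longrightarrow> 0 < 4 - (fst z)^2"
  unfolding Ds_def using zero_less_mult_iff[of s "4 - (fst z)^2"] by auto

lemma Ds_sub_D: assumes "0 < s" "s \<le> 1" shows "Ds s \<subseteq> D_set"
proof
  fix z assume z: "z \<in> Ds s"
  obtain x t where zz: "z = (x,t)" by fastforce
  have p: "0 < 4 - x^2" using Ds_pos[OF z assms(1)] zz by simp
  have l: "2 - s * (4 - x^2) < t" "t < 2" using z zz by (auto simp: Ds_def)
  have "s * (4 - x^2) \<le> 4 - x^2" using p assms by (simp add: mult_le_cancel_right1)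
  then have t1: "x^2 - 2 \<le> t" using l by linarith
  have "-2 < x \<and> x < 2" using p sq_lt4_iff[of x] by simp
  then have "\<bar>x\<bar> < 2" by linarith
  moreover have "-2 \<le> t" using t1 zero_le_power2[of x] by linarith
  ultimately show "z \<in> D_set" using zz t1 l by (auto simp: D_set_def)
qed

lemma Ds_mono: assumes "0 < s" "s \<le> s'" shows "Ds s \<subseteq> Ds s'"
proof
  fix z assume z: "z \<in> Ds s"
  have p: "0 < 4 - (fst z)^2" using Ds_pos[OF z assms(1)] .
  have "s * (4 - (fst z)^2) \<le> s' * (4 - (fst z)^2)" using p assms by (intro mult_right_mono) auto
  then show "z \<in> Ds s'" using z by (auto simp: Ds_def)
qed

lemma D2:
  fixes A2 B2 S :: real and E :: "(real \<times> real) set"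
  assumes A2: "A2 > 0" and B2: "B2 > 0" and S: "S > 0" and E: "E \<in> sets borel"
  shows "emeasure lborel {z::real\<times>real. (xf A2 (fst z), 2 - 4*S/(((fst z)^2 + A2) * ((snd z)^2 + B2))) \<in> E} = 0
     \<longleftrightarrow> emeasure lborel (E \<inter> Ds (S/(A2*B2))) = 0"
proof -
  define s where "s = S/(A2*B2)"
  have sp: "s > 0" using A2 B2 S by (simp add: s_def)
  define X where "X = {z::real\<times>real. (xf A2 (fst z), 2 - 4*S/(((fst z)^2 + A2) * ((snd z)^2 + B2))) \<in> E}"
  have Xm: "X \<in> sets borel"
  proof -
    have "continuous_on UNIV (\<lambda>z::real\<times>real. (xf A2 (fst z), 2 - 4*S/(((fst z)^2 + A2) * ((snd z)^2 + B2))))"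
      unfolding xf_def using A2 B2
      by (intro continuous_intros) (auto simp: add_nonneg_pos)
    from open_cont_borel[OF open_UNIV this E] show ?thesis by (simp add: X_def)
  qed
  define EDs where "EDs = E \<inter> Ds s"
  have EDm: "EDs \<in> sets borel" using E Ds_borel by (simp add: EDs_def)
  define h where "h x = emeasure lborel (Pair x -` EDs)" for x
  have hm: "h \<in> borel_measurable lborel"
    unfolding h_def by (rule lborel.measurable_emeasure_Pair[OF sets_pp[OF EDm]])
  have pt: "emeasure lborel (Pair a0 -` X) = 0 \<longleftrightarrow> h (xf A2 a0) = 0" for a0
  proof -
    define c where "c = 4 * S / (a0^2 + A2)"
    have cp: "c > 0" using S A2 by (simp add: c_def)
    define x where "x = xf A2 a0"
    have x2: "4 - x^2 = 4 * A2 / (a0^2 + A2)"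
    proof -
      have q: "sqrt (a0^2 + A2) ^ 2 = a0^2 + A2" using A2 by simp
      have "x^2 = 4 * a0^2 / (a0^2 + A2)" unfolding x_def xf_def using q by (simp add: power_divide power_mult_distrib)
      moreover have "0 < A2 + a0^2" using A2 zero_le_power2[of a0] by linarith
      then have "A2 + a0^2 \<noteq> 0" "a0^2 + A2 \<noteq> 0" by simp_all
      ultimately show ?thesis by (simp add: field_simps)
    qed
    have cB: "c / B2 = s * (4 - x^2)" unfolding x2 c_def s_def using A2 B2 by (simp add: field_simps)
    have sec: "Pair a0 -` X = {b. tf c B2 b \<in> Pair x -` E}"
      by (auto simp: X_def tf_def c_def x_def)
    have sec2: "{2 - c/B2<..<2} \<inter> Pair x -` E = Pair x -` EDs"
      unfolding cB by (auto simp: EDs_def Ds_def)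
    have "emeasure lborel (Pair a0 -` X) = 0 \<longleftrightarrow> negligible (Pair a0 -` X)"
      by (rule negl_lborel[OF sec_borel[OF Xm]])
    also have "\<dots> \<longleftrightarrow> negligible (Pair x -` EDs)" unfolding sec sec2[symmetric] by (rule t1D[OF cp B2])
    also have "\<dots> \<longleftrightarrow> h x = 0" unfolding h_def by (rule negl_lborel[OF sec_borel[OF EDm], symmetric])
    finally show ?thesis by (simp add: x_def)
  qed
  define H where "H = {x. h x \<noteq> 0}"
  have Hm: "H \<in> sets borel"
  proof -
    have "{x \<in> space lborel. h x \<noteq> 0} \<in> sets lborel" using hm by measurable
    then show ?thesis by (simp add: H_def)
  qed
  have H2: "H \<subseteq> {-2<..<2}"
  proof
    fix x assume "x \<in> H"
    then have "Pair x -` EDs \<noteq> {}" by (auto simp: H_def h_def)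
    then obtain t where "(x,t) \<in> Ds s" by (auto simp: EDs_def)
    then have "0 < 4 - x^2" using Ds_pos[OF _ sp] by fastforce
    then show "x \<in> {-2<..<2}" using sq_lt4_iff[of x] by simp
  qed
  have xfm: "xf A2 \<in> borel_measurable borel"
  proof -
    have "continuous_on UNIV (xf A2)" unfolding xf_def using A2 by (intro continuous_intros) (auto simp: add_nonneg_pos)
    then show ?thesis by (rule borel_measurable_continuous_onI)
  qed
  have pre: "xf A2 -` H \<in> sets borel" using measurable_sets_borel[OF xfm Hm] .
  have "emeasure lborel X = 0 \<longleftrightarrow> (AE a0 in lborel. emeasure lborel (Pair a0 -` X) = 0)"
    by (rule lborel_pair_zero[OF Xm])
  also have "\<dots> \<longleftrightarrow> (AE a0 in lborel. h (xf A2 a0) = 0)" using pt by simp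
  also have "\<dots> \<longleftrightarrow> emeasure lborel (xf A2 -` H) = 0"
    by (rule AE_iff_measurable) (use pre in \<open>auto simp: H_def\<close>)
  also have "\<dots> \<longleftrightarrow> negligible {a. xf A2 a \<in> H}" using negl_lborel[OF pre] by (simp add: vimage_def)
  also have "\<dots> \<longleftrightarrow> negligible ({-2<..<2} \<inter> H)" by (rule x1D[OF A2])
  also have "\<dots> \<longleftrightarrow> negligible H" using H2 by (simp add: Int_absorb1)
  also have "\<dots> \<longleftrightarrow> emeasure lborel H = 0" using negl_lborel[OF Hm] by simp
  also have "\<dots> \<longleftrightarrow> (AE x in lborel. h x = 0)"
    by (rule AE_iff_measurable[symmetric]) (use Hm in \<open>auto simp: H_def\<close>)
  also have "\<dots> \<longleftrightarrow> emeasure lborel EDs = 0" unfolding h_def by (rule lborel_pair_zero[OF EDm, symmetric])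
  finally show ?thesis by (simp add: X_def EDs_def s_def)
qed

lemma sq3: "(a::real)^2 + b^2 + c^2 = 0 \<Longrightarrow> a = 0 \<and> b = 0 \<and> c = 0"
proof -
  assume h: "a^2 + b^2 + c^2 = 0"
  have "a^2 \<le> 0" "b^2 \<le> 0" "c^2 \<le> 0"
    using h zero_le_power2[of a] zero_le_power2[of b] zero_le_power2[of c] by linarith+
  then show ?thesis by simp
qed

lemma sc_line: assumes "Sc a b = 0" "a \<noteq> 0" shows "b \<in> range (\<lambda>k. k *\<^sub>R a)"
proof -
  obtain a1 a2 a3 b1 b2 b3 where ab: "a = (a1,a2,a3)" "b = (b1,b2,b3)" by (cases a; cases b)
  have "Sc a b = (a2 * b3 - a3 * b2)^2 + (a3 * b1 - a1 * b3)^2 + (a1 * b2 - a2 * b1)^2"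
    by (simp add: ab Sc_def)
  then have c: "a2 * b3 - a3 * b2 = 0" "a3 * b1 - a1 * b3 = 0" "a1 * b2 - a2 * b1 = 0"
    using sq3 assms(1) by metis+
  define n where "n = a1^2 + a2^2 + a3^2"
  have n0: "n \<noteq> 0"
  proof
    assume "n = 0"
    then have "a1 = 0 \<and> a2 = 0 \<and> a3 = 0" unfolding n_def by (rule sq3)
    then show False using assms(2) by (simp add: ab zero_prod_def)
  qed
  define k where "k = (a1*b1 + a2*b2 + a3*b3) / n"
  have e1: "b1 * n - (a1*b1 + a2*b2 + a3*b3) * a1 = a3 * (a3 * b1 - a1 * b3) - a2 * (a1 * b2 - a2 * b1)"
    by (simp add: n_def algebra_simps power2_eq_square)
  have e2: "b2 * n - (a1*b1 + a2*b2 + a3*b3) * a2 = a1 * (a1 * b2 - a2 * b1) - a3 * (a2 * b3 - a3 * b2)"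
    by (simp add: n_def algebra_simps power2_eq_square)
  have e3: "b3 * n - (a1*b1 + a2*b2 + a3*b3) * a3 = a2 * (a2 * b3 - a3 * b2) - a1 * (a3 * b1 - a1 * b3)"
    by (simp add: n_def algebra_simps power2_eq_square)
  have "b1 * n - (a1*b1 + a2*b2 + a3*b3) * a1 = 0" unfolding e1 c by simp
  moreover have "b2 * n - (a1*b1 + a2*b2 + a3*b3) * a2 = 0" unfolding e2 c by simp
  moreover have "b3 * n - (a1*b1 + a2*b2 + a3*b3) * a3 = 0" unfolding e3 c by simp
  ultimately have "b1 = k * a1" "b2 = k * a2" "b3 = k * a3" using n0 by (simp_all add: k_def field_simps)
  then have "b = k *\<^sub>R a" by (simp add: ab)
  then show ?thesis by blast
qed

lemma Z_null: "emeasure lborel {w::(real\<times>real\<times>real)\<times>(real\<times>real\<times>real). Sc (fst w) (snd w) = 0} = 0"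
proof -
  define Z where "Z = {w::(real\<times>real\<times>real)\<times>(real\<times>real\<times>real). Sc (fst w) (snd w) = 0}"
  have "closed Z" unfolding Z_def
    by (intro closed_Collect_eq cont_Sc continuous_on_fst continuous_on_snd continuous_on_id continuous_on_const)
  then have Zm: "Z \<in> sets borel" by (rule borel_closed)
  have "AE a in lborel. emeasure lborel (Pair a -` Z) = 0"
  proof (rule AE_I')
    show "{0} \<in> null_sets (lborel :: (real\<times>real\<times>real) measure)"
      using negl_lborel[of "{0::real\<times>real\<times>real}"] by (simp add: null_sets_def)
    show "{a \<in> space lborel. \<not> emeasure lborel (Pair a -` Z) = 0} \<subseteq> {0}"
    proof clarify
      fix a :: "real\<times>real\<times>real" assume ne: "emeasure lborel (Pair a -` Z) \<noteq> 0"
      show "a = 0"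
      proof (rule ccontr)
        assume a0: "a \<noteq> 0"
        have "Pair a -` Z \<subseteq> range (\<lambda>k::real. k *\<^sub>R a)"
        proof
          fix b assume "b \<in> Pair a -` Z"
          then have "Sc a b = 0" by (simp add: Z_def)
          then show "b \<in> range (\<lambda>k::real. k *\<^sub>R a)" using sc_line a0 by blast
        qed
        moreover have "negligible (range (\<lambda>k::real. k *\<^sub>R a))"
          by (rule negligible_differentiable_image_lowdim) (auto intro: differentiable_on_scaleR)
        ultimately have "negligible (Pair a -` Z)" by (rule negligible_subset[rotated])
        then show False using ne negl_lborel[OF sec_borel[OF Zm]] by simp
      qed
    qed
  qed
  then show ?thesis using lborel_pair_zero[OF Zm] by (simp add: Z_def)
qed

lemma D_closed: "closed D_set"
proof -
  have "D_set = {z. -2 \<le> fst z \<and> fst z \<le> 2 \<and> -2 \<le> snd z \<and> snd z \<le> 2 \<and> (fst z)^2 - 2 \<le> snd z}"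
    by (auto simp: D_set_def)
  moreover have "closed {z::real\<times>real. -2 \<le> fst z \<and> fst z \<le> 2 \<and> -2 \<le> snd z \<and> snd z \<le> 2 \<and> (fst z)^2 - 2 \<le> snd z}"
    by (intro closed_Collect_conj closed_Collect_le continuous_intros)
  ultimately show ?thesis by simp
qed

lemma exists_n:
  assumes E: "E \<in> sets borel" and ne: "emeasure lborel (E \<inter> D_set) \<noteq> 0"
  shows "\<exists>n::nat. emeasure lborel (E \<inter> Ds (1 - 1 / (real n + 2))) \<noteq> 0"
proof (rule ccontr)
  assume "\<not> ?thesis"
  then have z: "\<And>n::nat. emeasure lborel (E \<inter> Ds (1 - 1 / (real n + 2))) = 0" by simp
  define B1 where "B1 = {z::real\<times>real. (0,1) \<bullet> z = 2}"
  define B2 where "B2 = {z::real\<times>real. (1,0) \<bullet> z = 2}"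
  define B3 where "B3 = {z::real\<times>real. (1,0) \<bullet> z = -2}"
  define B4 where "B4 = range (\<lambda>x::real. (x, x^2 - 2))"
  have nb: "negligible B1" "negligible B2" "negligible B3" unfolding B1_def B2_def B3_def
    by (rule negligible_hyperplane; simp)+
  have d4: "(\<lambda>x::real. (x, x^2 - 2)) differentiable_on UNIV"
  proof (rule differentiable_at_imp_differentiable_on)
    fix x :: real
    have "(\<lambda>x::real. x^2 - 2) differentiable (at x)" by (intro dintros)
    then obtain g where "((\<lambda>x::real. x^2 - 2) has_derivative g) (at x)" using differentiable_def by blast
    then have "((\<lambda>x::real. (x, x^2 - 2)) has_derivative (\<lambda>h. (h, g h))) (at x)"
      by (intro has_derivative_Pair has_derivative_ident)
    then show "(\<lambda>x::real. (x, x^2 - 2)) differentiable (at x)" using differentiable_def by blast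
  qed
  have nb4: "negligible B4" unfolding B4_def by (rule negligible_differentiable_image_lowdim[OF _ d4]) simp
  have Un: "(\<Union>n::nat. E \<inter> Ds (1 - 1 / (real n + 2))) \<in> null_sets lborel"
    using z E Ds_borel by (intro null_sets_UN) (simp add: null_sets_def)
  have sub: "E \<inter> D_set \<subseteq> (\<Union>n::nat. E \<inter> Ds (1 - 1 / (real n + 2))) \<union> (B1 \<union> B2 \<union> B3 \<union> B4)"
  proof
    fix z assume zE: "z \<in> E \<inter> D_set"
    obtain x t where zz: "z = (x,t)" by fastforce
    show "z \<in> (\<Union>n::nat. E \<inter> Ds (1 - 1 / (real n + 2))) \<union> (B1 \<union> B2 \<union> B3 \<union> B4)"
    proof (cases "z \<in> B1 \<union> B2 \<union> B3 \<union> B4")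
      case False
      then have ne: "t \<noteq> 2" "x \<noteq> 2" "x \<noteq> -2" "t \<noteq> x^2 - 2"
        by (auto simp: zz B1_def B2_def B3_def B4_def)
      have D: "-2 \<le> x" "x \<le> 2" "t \<le> 2" "x^2 - 2 \<le> t" using zE zz by (auto simp: D_set_def)
      have x4: "0 < 4 - x^2" using sq_lt4[of x] D ne by simp
      have t2: "t < 2" "x^2 - 2 < t" using D ne by auto
      define r where "r = (2 - t) / (4 - x^2)"
      have r1: "r < 1" using x4 t2 by (simp add: r_def divide_less_eq)
      obtain n :: nat where n: "n > 0" "inverse (real n) < 1 - r" using ex_inverse_of_nat_less[of "1 - r"] r1 by auto
      have "1 / (real n + 2) < inverse (real n)" using n by (simp add: field_simps)
      then have sr: "r < 1 - 1 / (real n + 2)" using n by linarith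
      have "r * (4 - x^2) = 2 - t" using x4 by (simp add: r_def)
      moreover have "r * (4 - x^2) < (1 - 1 / (real n + 2)) * (4 - x^2)"
        using sr x4 by (intro mult_strict_right_mono) auto
      ultimately have "z \<in> Ds (1 - 1 / (real n + 2))" using t2 by (simp add: Ds_def zz)
      then show ?thesis using zE by blast
    qed blast
  qed
  have "negligible (\<Union>n::nat. E \<inter> Ds (1 - 1 / (real n + 2)))"
    using Un negl_lborel[OF null_setsD2[OF Un, unfolded sets_lborel]] null_setsD1[OF Un] by simp
  then have "negligible ((\<Union>n::nat. E \<inter> Ds (1 - 1 / (real n + 2))) \<union> (B1 \<union> B2 \<union> B3 \<union> B4))"
    using nb nb4 by simp
  then have "negligible (E \<inter> D_set)" using sub by (rule negligible_subset)
  moreover have "E \<inter> D_set \<in> sets borel" using E D_closed by (auto intro: borel_closed)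
  ultimately have "emeasure lborel (E \<inter> D_set) = 0" using negl_lborel by blast
  then show False using ne by simp
qed

lemma key_sec:
  fixes E :: "(real \<times> real) set" and a b :: "real\<times>real\<times>real"
  assumes E: "E \<in> sets borel" and S: "Sc a b \<noteq> 0"
  shows "0 < nq 0 a \<and> 0 < nq 0 b \<and> 0 < Sc a b \<and> Sc a b \<le> nq 0 a * nq 0 b \<and>
    (emeasure lborel (Pair (a,b) -` {p \<in> PP. Phi p \<in> E}) = 0
     \<longleftrightarrow> emeasure lborel (E \<inter> Ds (Sc a b / (nq 0 a * nq 0 b))) = 0)"
proof -
  have l: "Sc a b \<le> nq 0 a * nq 0 b" by (rule lagrange)
  have s0: "0 \<le> Sc a b" by (rule Sc_nonneg)
  have Sp: "0 < Sc a b" using S s0 by simp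
  have na: "0 \<le> nq 0 a" "0 \<le> nq 0 b" by (rule nq_nonneg)+
  have A2: "0 < nq 0 a"
  proof (rule ccontr)
    assume "\<not> 0 < nq 0 a" then have "nq 0 a = 0" using na by simp
    then show False using l Sp by simp
  qed
  have B2: "0 < nq 0 b"
  proof (rule ccontr)
    assume "\<not> 0 < nq 0 b" then have "nq 0 b = 0" using na by simp
    then show False using l Sp by simp
  qed
  have "Pair (a,b) -` {p \<in> PP. Phi p \<in> E} =
     {z::real\<times>real. (xf (nq 0 a) (fst z), 2 - 4 * Sc a b / (((fst z)^2 + nq 0 a) * ((snd z)^2 + nq 0 b))) \<in> E}"
  proof -
    have "((a,b),z) \<in> PP" for z :: "real \<times> real"
      using A2 B2 nq_split[of "fst z" a] nq_split[of "snd z" b] zero_le_power2[of "fst z"] zero_le_power2[of "snd z"]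
      by (simp add: PP_def)
    moreover have "Phi ((a,b),z) = (xf (nq 0 a) (fst z), 2 - 4 * Sc a b / (((fst z)^2 + nq 0 a) * ((snd z)^2 + nq 0 b)))" for z
      using nq_split[of "fst z" a] nq_split[of "snd z" b] by (simp add: Phi_def xf_def)
    ultimately show ?thesis by auto
  qed
  then show ?thesis using D2[OF A2 B2 Sp E] A2 B2 Sp l by simp
qed

lemma main_null:
  assumes E: "E \<in> sets borel"
  shows "emeasure lborel {p \<in> PP. Phi p \<in> E} = 0 \<longleftrightarrow> emeasure lborel (E \<inter> D_set) = 0"
proof -
  define N where "N = {p \<in> PP. Phi p \<in> E}"
  have Nm: "N \<in> sets borel" unfolding N_def by (rule open_cont_borel[OF open_PP cont_Phi E])
  define Z where "Z = {w::(real\<times>real\<times>real)\<times>(real\<times>real\<times>real). Sc (fst w) (snd w) = 0}"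
  have Zm: "Z \<in> sets borel"
  proof -
    have "closed Z" unfolding Z_def
      by (intro closed_Collect_eq cont_Sc continuous_on_fst continuous_on_snd continuous_on_id continuous_on_const)
    then show ?thesis by (rule borel_closed)
  qed
  have Znull: "Z \<in> null_sets lborel" using Z_null Zm by (simp add: Z_def null_sets_def)
  have EDm: "E \<inter> D_set \<in> sets borel" using E D_closed by (auto intro: borel_closed)
  have eq: "emeasure lborel N = 0 \<longleftrightarrow> (AE w in lborel. emeasure lborel (Pair w -` N) = 0)"
    by (rule lborel_pair_zero[OF Nm])
  show ?thesis unfolding N_def[symmetric] eq
  proof
    assume ae: "AE w in lborel. emeasure lborel (Pair w -` N) = 0"
    show "emeasure lborel (E \<inter> D_set) = 0"
    proof (rule ccontr)
      assume ne: "emeasure lborel (E \<inter> D_set) \<noteq> 0"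
      obtain n :: nat where n: "emeasure lborel (E \<inter> Ds (1 - 1 / (real n + 2))) \<noteq> 0"
        using exists_n[OF E ne] by blast
      define s0 where "s0 = 1 - 1 / (real n + 2)"
      have s0p: "0 < s0" "s0 < 1" by (auto simp: s0_def field_simps)
      define W where "W = {w::(real\<times>real\<times>real)\<times>(real\<times>real\<times>real). s0 * (nq 0 (fst w) * nq 0 (snd w)) < Sc (fst w) (snd w)}"
      have Wo: "open W" unfolding W_def
        by (intro open_Collect_less continuous_intros cont_Sc cont_nq continuous_on_fst continuous_on_snd continuous_on_id)
      have "((1,0,0),(0,1,0)) \<in> W" using s0p by (simp add: W_def nq_def Sc_def)
      then have Wpos: "emeasure lborel W > 0" by (rule open_pos[OF Wo])
      obtain N0 where N0': "{w \<in> space lborel. \<not> emeasure lborel (Pair w -` N) = 0} \<subseteq> N0"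
          "emeasure lborel N0 = 0" "N0 \<in> sets lborel"
        using ae by (rule AE_E)
      have N0: "N0 \<in> null_sets lborel" "{w \<in> space lborel. \<not> emeasure lborel (Pair w -` N) = 0} \<subseteq> N0"
        using N0' by (auto simp: null_sets_def)
      have "W \<subseteq> N0"
      proof
        fix w assume wW: "w \<in> W"
        obtain a b where wab: "w = (a,b)" using surj_pair[of w] by blast
        have lt: "s0 * (nq 0 a * nq 0 b) < Sc a b" using wW by (simp add: W_def wab)
        have "0 \<le> s0 * (nq 0 a * nq 0 b)" using s0p nq_nonneg[of 0 a] nq_nonneg[of 0 b] by simp
        then have Sne: "Sc a b \<noteq> 0" using lt by simp
        note k = key_sec[OF E Sne]
        have ABp: "0 < nq 0 a * nq 0 b" using k by simp
        have "s0 < Sc a b / (nq 0 a * nq 0 b)" using lt ABp by (simp add: less_divide_eq)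
        then have "Ds s0 \<subseteq> Ds (Sc a b / (nq 0 a * nq 0 b))" using s0p by (intro Ds_mono) auto
        then have "emeasure lborel (E \<inter> Ds s0) \<le> emeasure lborel (E \<inter> Ds (Sc a b / (nq 0 a * nq 0 b)))"
          by (intro emeasure_mono) (use E Ds_borel in auto)
        then have "emeasure lborel (E \<inter> Ds (Sc a b / (nq 0 a * nq 0 b))) \<noteq> 0" using n by (auto simp: s0_def)
        then have "emeasure lborel (Pair w -` N) \<noteq> 0" using k by (simp add: wab N_def)
        then show "w \<in> N0" using N0(2) by auto
      qed
      moreover have "W \<in> sets borel" using Wo by (rule borel_open)
      ultimately have "W \<in> null_sets lborel" using N0(1) null_sets_subset by (metis sets_lborel)
      then show False using Wpos by (simp add: null_sets_def)
    qed
  next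
    assume ED0: "emeasure lborel (E \<inter> D_set) = 0"
    show "AE w in lborel. emeasure lborel (Pair w -` N) = 0"
    proof (rule AE_I'[OF Znull])
      show "{w \<in> space lborel. \<not> emeasure lborel (Pair w -` N) = 0} \<subseteq> Z"
      proof clarify
        fix w assume ne: "emeasure lborel (Pair w -` N) \<noteq> 0"
        obtain a b where wab: "w = (a,b)" using surj_pair[of w] by blast
        show "w \<in> Z"
        proof (rule ccontr)
          assume "w \<notin> Z"
          then have Sne: "Sc a b \<noteq> 0" by (simp add: Z_def wab)
          note k = key_sec[OF E Sne]
          define s where "s = Sc a b / (nq 0 a * nq 0 b)"
          have sp: "0 < s" "s \<le> 1" using k by (auto simp: s_def divide_le_eq_1)
          have "emeasure lborel (E \<inter> Ds s) \<le> emeasure lborel (E \<inter> D_set)"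
            using Ds_sub_D[OF sp] by (intro emeasure_mono) (use EDm in auto)
          then have "emeasure lborel (E \<inter> Ds s) = 0" using ED0 by simp
          then have "emeasure lborel (Pair w -` N) = 0" using k by (simp add: wab N_def s_def)
          then show False using ne by simp
        qed
      qed
    qed
  qed
qed

theorem lemma3p2:
  fixes \<mu> :: "((complex^2^2) \<times> (complex^2^2)) measure"
  assumes "haar_SU2_sq \<mu>"
  shows "Pi_map ` (SU2 \<times> SU2) = D_set
    \<and> absolutely_continuous (distr \<mu> borel Pi_map) (density lborel (indicator D_set))
    \<and> absolutely_continuous (density lborel (indicator D_set)) (distr \<mu> borel Pi_map)"
proof -
  have sp: "space \<mu> = SU2 \<times> SU2" and st: "sets \<mu> = sets (restrict_space borel (SU2 \<times> SU2))"
    using assms unfolding haar_SU2_sq_def by auto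
  have Dm: "D_set \<in> sets borel" using D_closed by (rule borel_closed)
  have cPi: "continuous_on UNIV Pi'" using cont_Pi'[OF continuous_on_id] by simp
  have Pim: "Pi_map \<in> measurable \<mu> borel"
  proof -
    have "Pi' \<in> measurable \<mu> borel"
      by (subst measurable_cong_sets[OF st refl])
         (rule measurable_restrict_space1[OF borel_measurable_continuous_onI[OF cPi]])
    then show ?thesis by (rule measurable_cong[THEN iffD1, rotated]) (simp add: sp Pi_map_eq)
  qed
  have dens: "emeasure (density lborel (indicator D_set)) E = emeasure lborel (E \<inter> D_set)" if "E \<in> sets borel" for E
  proof -
    have "emeasure (density lborel (indicator D_set)) E = (\<integral>\<^sup>+x. indicator D_set x * indicator E x \<partial>lborel)"
      using that Dm by (intro emeasure_density) auto
    also have "\<dots> = (\<integral>\<^sup>+x. indicator (E \<inter> D_set) x \<partial>lborel)"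
      by (intro nn_integral_cong) (auto simp: indicator_def)
    also have "\<dots> = emeasure lborel (E \<inter> D_set)" using that Dm by simp
    finally show ?thesis .
  qed
  have key: "E \<in> null_sets (distr \<mu> borel Pi_map) \<longleftrightarrow> E \<in> null_sets (density lborel (indicator D_set))" for E
  proof (cases "E \<in> sets borel")
    case True
    have "E \<in> null_sets (distr \<mu> borel Pi_map) \<longleftrightarrow> emeasure \<mu> (Pi_map -` E \<inter> space \<mu>) = 0"
      using True Pim by (simp add: null_sets_def emeasure_distr)
    also have "\<dots> \<longleftrightarrow> emeasure lborel {p \<in> PP. Phi p \<in> E} = 0" by (rule haar_transfer[OF assms True])
    also have "\<dots> \<longleftrightarrow> emeasure lborel (E \<inter> D_set) = 0" by (rule main_null[OF True])
    also have "\<dots> \<longleftrightarrow> E \<in> null_sets (density lborel (indicator D_set))"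
      using True dens[OF True] by (simp add: null_sets_def)
    finally show ?thesis .
  next
    case False
    then show ?thesis by (simp add: null_sets_def)
  qed
  show ?thesis using image_eq key unfolding absolutely_continuous_def by blast
qed

end
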